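(* Let $m,\varepsilon>0$ and write $\widetilde{A}_k(x,t)=\widetilde{A}_k(x,t,m,\varepsilon)$. For each $k\in\{1,2\}$ and each $(x,t)\in\varepsilon\mathbb{Z}^2$, where $(x,t)\ne(0,0)$ if $k=1$ and $(x,t)\notin\{(-\varepsilon,0),(0,-\varepsilon)\}$ if $k=2$, $$\sqrt{1+m^2\varepsilon^2}\,\widetilde{A}_k(x,t+\varepsilon)+\sqrt{1+m^2\varepsilon^2}\,\widetilde{A}_k(x,t-\varepsilon)-\widetilde{A}_k(x+\varepsilon,t)-\widetilde{A}_k(x-\varepsilon,t)=0.$$
   Context: $\delta_{xy}$ is the Kronecker delta. For $\delta\in(0,1)$ let $A_k(x,t)=A_k(x,t,m,\varepsilon,\delta)$, $k\in\{1,2\}$, be the unique pair of complex-valued functions on $\{(x,t)\in\mathbb{R}^2:2x/\varepsilon,2t/\varepsilon,(x+t)/\varepsilon\in\mathbb{Z}\}$ satisfying: (1) for $2x/\varepsilon,2t/\varepsilon$ even, $A_1(x,t)=\frac{1}{\sqrt{1+m^2\varepsilon^2}}(A_1(x+\frac{\varepsilon}{2},t-\frac{\varepsilon}{2})+m\varepsilon A_2(x+\frac{\varepsilon}{2},t-\frac{\varepsilon}{2}))$ and $A_2(x,t)=\frac{1}{\sqrt{1+m^2\varepsilon^2}}(A_2(x-\frac{\varepsilon}{2},t-\frac{\varepsilon}{2})-m\varepsilon A_1(x-\frac{\varepsilon}{2},t-\frac{\varepsilon}{2}))+2\delta_{x0}\delta_{t0}$; (2) for $2x/\varepsilon,2t/\varepsilon$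 odd, $A_1(x,t)=\frac{1}{\sqrt{1-\delta^2}}(A_1(x+\frac{\varepsilon}{2},t-\frac{\varepsilon}{2})-i\delta A_2(x+\frac{\varepsilon}{2},t-\frac{\varepsilon}{2}))$ and $A_2(x,t)=\frac{1}{\sqrt{1-\delta^2}}(A_2(x-\frac{\varepsilon}{2},t-\frac{\varepsilon}{2})+i\delta A_1(x-\frac{\varepsilon}{2},t-\frac{\varepsilon}{2}))$; (3) $\sum_{(x,t)\in\varepsilon\mathbb{Z}^2}(|A_1|^2+|A_2|^2)<\infty$ (existence and uniqueness are known). $\widetilde{A}_k(x,t,m,\varepsilon):=\lim_{\delta\searrow0}A_k(x,t,m,\varepsilon,\delta)$ for $(x,t)\in\varepsilon\mathbb{Z}^2$ (known to exist). *)

theory Defs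
  imports "HOL-Analysis.Analysis"
begin

text \<open>Lattice points (x,t) with 2x/eps, 2t/eps, (x+t)/eps integers are encoded by
  integer indices (a,b) = (2x/eps, 2t/eps) with a+b even; so x = a*eps/2, t = b*eps/2.
  "2x/eps, 2t/eps even" means a, b even, i.e. (x,t) in eps Z^2;
  "2x/eps, 2t/eps odd" means a, b odd. A shift x +- eps/2 is a +- 1.\<close>

definition is_A ::
  "real \<Rightarrow> real \<Rightarrow> real \<Rightarrow> (int \<Rightarrow> int \<Rightarrow> complex) \<Rightarrow> (int \<Rightarrow> int \<Rightarrow> complex) \<Rightarrow> bool" where
  "is_A m eps \<delta> A1 A2 \<longleftrightarrow>
     (\<forall>a b. even a \<and> even b \<longrightarrow>
        A1 a b = (1 / sqrt (1 + m\<^sup>2 * eps\<^sup>2)) *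
                  (A1 (a + 1) (b - 1) + complex_of_real (m * eps) * A2 (a + 1) (b - 1)) \<and>
        A2 a b = (1 / sqrt (1 + m\<^sup>2 * eps\<^sup>2)) *
                  (A2 (a - 1) (b - 1) - complex_of_real (m * eps) * A1 (a - 1) (b - 1))
                 + (if a = 0 \<and> b = 0 then 2 else 0)) \<and>
     (\<forall>a b. odd a \<and> odd b \<longrightarrow>
        A1 a b = (1 / sqrt (1 - \<delta>\<^sup>2)) *
                  (A1 (a + 1) (b - 1) - \<i> * complex_of_real \<delta> * A2 (a + 1) (b - 1)) \<and>
        A2 a b = (1 / sqrt (1 - \<delta>\<^sup>2)) *
                  (A2 (a - 1) (b - 1) + \<i> * complex_of_real \<delta> * A1 (a - 1) (b - 1))) \<and>
     (\<lambda>(i::int, j::int). (cmod (A1 (2*i) (2*j)))\<^sup>2 + (cmod (A2 (2*i) (2*j)))\<^sup>2) summable_on UNIV"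

end

theory Submission
  imports Defs
begin

lemma ev01: "eventually (\<lambda>d::real. 0 < d \<and> d < 1) (at_right 0)"
  by (subst eventually_at_right[OF zero_less_one]) (auto intro!: exI[of _ 1])

lemma dlim: "((\<lambda>d::real. complex_of_real (1 / sqrt (1 - d\<^sup>2))) \<longlongrightarrow> 1) (at_right 0)"
proof -
  have "((\<lambda>d::real. 1 / sqrt (1 - d\<^sup>2)) \<longlongrightarrow> 1 / sqrt (1 - 0\<^sup>2)) (at_right 0)"
    by (intro tendsto_intros) auto
  then have "((\<lambda>d::real. 1 / sqrt (1 - d\<^sup>2)) \<longlongrightarrow> 1) (at_right 0)" by simp
  then have "((\<lambda>d::real. complex_of_real (1 / sqrt (1 - d\<^sup>2))) \<longlongrightarrow> complex_of_real 1) (at_right 0)"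
    by (rule tendsto_of_real)
  then show ?thesis by simp
qed

lemma dlim0: "((\<lambda>d::real. complex_of_real d) \<longlongrightarrow> 0) (at_right 0)"
proof -
  have "((\<lambda>d::real. d) \<longlongrightarrow> 0) (at_right 0)" by (simp add: tendsto_ident_at)
  then show ?thesis using tendsto_of_real by fastforce
qed

lemma E1:
  assumes sol: "\<And>\<delta>. 0 < \<delta> \<Longrightarrow> \<delta> < 1 \<Longrightarrow> is_A m eps \<delta> (A1 \<delta>) (A2 \<delta>)"
    and lim1: "\<And>i j. ((\<lambda>\<delta>. A1 \<delta> (2*i) (2*j)) \<longlongrightarrow> At1 i j) (at_right 0)"
    and lim2: "\<And>i j. ((\<lambda>\<delta>. A2 \<delta> (2*i) (2*j)) \<longlongrightarrow> At2 i j) (at_right 0)"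
  shows "At1 i j = (1 / sqrt (1 + m\<^sup>2 * eps\<^sup>2)) * (At1 (i+1) (j-1) + complex_of_real (m*eps) * At2 i (j-1))"
proof -
  define F where "F = (\<lambda>d::real. (1 / sqrt (1 + m\<^sup>2 * eps\<^sup>2)) *
     (complex_of_real (1 / sqrt (1 - d\<^sup>2)) * (A1 d (2*(i+1)) (2*(j-1)) - \<i> * complex_of_real d * A2 d (2*(i+1)) (2*(j-1)))
      + complex_of_real (m*eps) * (complex_of_real (1 / sqrt (1 - d\<^sup>2)) * (A2 d (2*i) (2*(j-1)) + \<i> * complex_of_real d * A1 d (2*i) (2*(j-1))))))"
  have e: "eventually (\<lambda>d. F d = A1 d (2*i) (2*j)) (at_right 0)"
    using ev01
  proof (rule eventually_mono)
    fix d :: real assume "0 < d \<and> d < 1"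
    then have S: "is_A m eps d (A1 d) (A2 d)" using sol by auto
    note D = S[unfolded is_A_def]
    have ev1: "\<And>a b. even a \<Longrightarrow> even b \<Longrightarrow> A1 d a b = (1 / sqrt (1 + m\<^sup>2 * eps\<^sup>2)) *
                  (A1 d (a + 1) (b - 1) + complex_of_real (m * eps) * A2 d (a + 1) (b - 1))"
      using D by blast
    have ev2: "\<And>a b. even a \<Longrightarrow> even b \<Longrightarrow> A2 d a b = (1 / sqrt (1 + m\<^sup>2 * eps\<^sup>2)) *
                  (A2 d (a - 1) (b - 1) - complex_of_real (m * eps) * A1 d (a - 1) (b - 1))
                 + (if a = 0 \<and> b = 0 then 2 else 0)"
      using D by blast
    have od1: "\<And>a b. odd a \<Longrightarrow> odd b \<Longrightarrow> A1 d a b = (1 / sqrt (1 - d\<^sup>2)) *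
                  (A1 d (a + 1) (b - 1) - \<i> * complex_of_real d * A2 d (a + 1) (b - 1))"
      using D by blast
    have od2: "\<And>a b. odd a \<Longrightarrow> odd b \<Longrightarrow> A2 d a b = (1 / sqrt (1 - d\<^sup>2)) *
                  (A2 d (a - 1) (b - 1) + \<i> * complex_of_real d * A1 d (a - 1) (b - 1))"
      using D by blast
    have h1: "A1 d (2*i) (2*j) = (1 / sqrt (1 + m\<^sup>2 * eps\<^sup>2)) *
                  (A1 d (2*i + 1) (2*j - 1) + complex_of_real (m * eps) * A2 d (2*i + 1) (2*j - 1))"
      by (rule ev1) auto
    have h2: "A1 d (2*i+1) (2*j-1) = (1 / sqrt (1 - d\<^sup>2)) *
                  (A1 d (2*i+1 + 1) (2*j-1 - 1) - \<i> * complex_of_real d * A2 d (2*i+1 + 1) (2*j-1 - 1))"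
      by (rule od1) auto
    have h3: "A2 d (2*i+1) (2*j-1) = (1 / sqrt (1 - d\<^sup>2)) *
                  (A2 d (2*i+1 - 1) (2*j-1 - 1) + \<i> * complex_of_real d * A1 d (2*i+1 - 1) (2*j-1 - 1))"
      by (rule od2) auto
    have r: "2*i+1+1 = 2*(i+1)" "2*j-1-1 = 2*(j-1)" "2*i+1-1 = 2*i" by auto
    show "F d = A1 d (2*i) (2*j)" unfolding h1 h2 h3 r F_def by simp
  qed
  have "(F \<longlongrightarrow> (1 / sqrt (1 + m\<^sup>2 * eps\<^sup>2)) *
     (1 * (At1 (i+1) (j-1) - \<i> * 0 * At2 (i+1) (j-1))
      + complex_of_real (m*eps) * (1 * (At2 i (j-1) + \<i> * 0 * At1 i (j-1))))) (at_right 0)"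
    unfolding F_def
    by (intro tendsto_intros dlim dlim0 lim1 lim2)
  then have "(F \<longlongrightarrow> (1 / sqrt (1 + m\<^sup>2 * eps\<^sup>2)) * (At1 (i+1) (j-1) + complex_of_real (m*eps) * At2 i (j-1))) (at_right 0)"
    by simp
  then have "((\<lambda>d. A1 d (2*i) (2*j)) \<longlongrightarrow> (1 / sqrt (1 + m\<^sup>2 * eps\<^sup>2)) * (At1 (i+1) (j-1) + complex_of_real (m*eps) * At2 i (j-1))) (at_right 0)"
    using e by (rule Lim_transform_eventually)
  then show ?thesis using lim1 tendsto_unique trivial_limit_at_right_real by blast
qed

lemma E2:
  assumes sol: "\<And>\<delta>. 0 < \<delta> \<Longrightarrow> \<delta> < 1 \<Longrightarrow> is_A m eps \<delta> (A1 \<delta>) (A2 \<delta>)"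
    and lim1: "\<And>i j. ((\<lambda>\<delta>. A1 \<delta> (2*i) (2*j)) \<longlongrightarrow> At1 i j) (at_right 0)"
    and lim2: "\<And>i j. ((\<lambda>\<delta>. A2 \<delta> (2*i) (2*j)) \<longlongrightarrow> At2 i j) (at_right 0)"
  shows "At2 i j = (1 / sqrt (1 + m\<^sup>2 * eps\<^sup>2)) * (At2 (i-1) (j-1) - complex_of_real (m*eps) * At1 i (j-1))
           + (if i = 0 \<and> j = 0 then 2 else 0)"
proof -
  define F where "F = (\<lambda>d::real. (1 / sqrt (1 + m\<^sup>2 * eps\<^sup>2)) *
     (complex_of_real (1 / sqrt (1 - d\<^sup>2)) * (A2 d (2*(i-1)) (2*(j-1)) + \<i> * complex_of_real d * A1 d (2*(i-1)) (2*(j-1)))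
      - complex_of_real (m*eps) * (complex_of_real (1 / sqrt (1 - d\<^sup>2)) * (A1 d (2*i) (2*(j-1)) - \<i> * complex_of_real d * A2 d (2*i) (2*(j-1)))))
      + (if i = 0 \<and> j = 0 then 2 else 0))"
  have e: "eventually (\<lambda>d. F d = A2 d (2*i) (2*j)) (at_right 0)"
    using ev01
  proof (rule eventually_mono)
    fix d :: real assume "0 < d \<and> d < 1"
    then have S: "is_A m eps d (A1 d) (A2 d)" using sol by auto
    note D = S[unfolded is_A_def]
    have ev1: "\<And>a b. even a \<Longrightarrow> even b \<Longrightarrow> A1 d a b = (1 / sqrt (1 + m\<^sup>2 * eps\<^sup>2)) *
                  (A1 d (a + 1) (b - 1) + complex_of_real (m * eps) * A2 d (a + 1) (b - 1))"
      using D by blast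
    have ev2: "\<And>a b. even a \<Longrightarrow> even b \<Longrightarrow> A2 d a b = (1 / sqrt (1 + m\<^sup>2 * eps\<^sup>2)) *
                  (A2 d (a - 1) (b - 1) - complex_of_real (m * eps) * A1 d (a - 1) (b - 1))
                 + (if a = 0 \<and> b = 0 then 2 else 0)"
      using D by blast
    have od1: "\<And>a b. odd a \<Longrightarrow> odd b \<Longrightarrow> A1 d a b = (1 / sqrt (1 - d\<^sup>2)) *
                  (A1 d (a + 1) (b - 1) - \<i> * complex_of_real d * A2 d (a + 1) (b - 1))"
      using D by blast
    have od2: "\<And>a b. odd a \<Longrightarrow> odd b \<Longrightarrow> A2 d a b = (1 / sqrt (1 - d\<^sup>2)) *
                  (A2 d (a - 1) (b - 1) + \<i> * complex_of_real d * A1 d (a - 1) (b - 1))"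
      using D by blast
    have h1: "A2 d (2*i) (2*j) = (1 / sqrt (1 + m\<^sup>2 * eps\<^sup>2)) *
                  (A2 d (2*i - 1) (2*j - 1) - complex_of_real (m * eps) * A1 d (2*i - 1) (2*j - 1))
                 + (if 2*i = 0 \<and> 2*j = 0 then 2 else 0)"
      by (rule ev2) auto
    have h2: "A1 d (2*i-1) (2*j-1) = (1 / sqrt (1 - d\<^sup>2)) *
                  (A1 d (2*i-1 + 1) (2*j-1 - 1) - \<i> * complex_of_real d * A2 d (2*i-1 + 1) (2*j-1 - 1))"
      by (rule od1) auto
    have h3: "A2 d (2*i-1) (2*j-1) = (1 / sqrt (1 - d\<^sup>2)) *
                  (A2 d (2*i-1 - 1) (2*j-1 - 1) + \<i> * complex_of_real d * A1 d (2*i-1 - 1) (2*j-1 - 1))"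
      by (rule od2) auto
    have r: "2*i-1+1 = 2*i" "2*j-1-1 = 2*(j-1)" "2*i-1-1 = 2*(i-1)" by auto
    show "F d = A2 d (2*i) (2*j)" unfolding h1 h2 h3 r F_def by simp
  qed
  have "(F \<longlongrightarrow> (1 / sqrt (1 + m\<^sup>2 * eps\<^sup>2)) *
     (1 * (At2 (i-1) (j-1) + \<i> * 0 * At1 (i-1) (j-1))
      - complex_of_real (m*eps) * (1 * (At1 i (j-1) - \<i> * 0 * At2 i (j-1))))
      + (if i = 0 \<and> j = 0 then 2 else 0)) (at_right 0)"
    unfolding F_def
    by (intro tendsto_intros dlim dlim0 lim1 lim2)
  then have "(F \<longlongrightarrow> (1 / sqrt (1 + m\<^sup>2 * eps\<^sup>2)) * (At2 (i-1) (j-1) - complex_of_real (m*eps) * At1 i (j-1))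
           + (if i = 0 \<and> j = 0 then 2 else 0)) (at_right 0)"
    by simp
  then have "((\<lambda>d. A2 d (2*i) (2*j)) \<longlongrightarrow> (1 / sqrt (1 + m\<^sup>2 * eps\<^sup>2)) * (At2 (i-1) (j-1) - complex_of_real (m*eps) * At1 i (j-1))
           + (if i = 0 \<and> j = 0 then 2 else 0)) (at_right 0)"
    using e by (rule Lim_transform_eventually)
  then show ?thesis using lim2 tendsto_unique trivial_limit_at_right_real by blast
qed


lemma alg1:
  fixes c \<mu> xa ya za xb w zb :: complex
  assumes "c*xa = ya + \<mu>*za" "c*xb = w + \<mu>*zb" "c*za = zb - \<mu>*w" "c*c = 1+\<mu>*\<mu>" "c \<noteq> 0"
  shows "c*xa + c*w - ya - xb = 0"
proof -
  have "c * (c*xa + c*w - ya - xb) = c*(c*xa) + (c*c)*w - c*ya - c*xb" by (simp add: algebra_simps)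
  also have "\<dots> = c*(ya + \<mu>*za) + (1+\<mu>*\<mu>)*w - c*ya - (w+\<mu>*zb)" using assms by simp
  also have "\<dots> = \<mu>*(c*za) + \<mu>*\<mu>*w - \<mu>*zb" by (simp add: algebra_simps)
  also have "\<dots> = \<mu>*((zb - \<mu>*w) + \<mu>*w - zb)" by (subst assms(3)) (simp add: algebra_simps)
  also have "\<dots> = 0" by simp
  finally show ?thesis using assms by simp
qed

lemma alg2:
  fixes c \<mu> va vb a vd ve vf :: complex
  assumes "c* va = vb - \<mu>*a" "c* vd = ve - \<mu>* vf" "c*a = vf + \<mu>* ve" "c*c = 1+\<mu>*\<mu>" "c \<noteq> 0"
  shows "c* va + c* ve - vd - vb = 0"
proof -
  have "c * (c* va + c* ve - vd - vb) = c*(c* va) + (c*c)* ve - c* vd - c* vb" by (simp add: algebra_simps)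
  also have "\<dots> = c*(vb - \<mu>*a) + (1+\<mu>*\<mu>)* ve - (ve - \<mu>* vf) - c* vb" using assms by simp
  also have "\<dots> = - \<mu>*(c*a) + \<mu>*\<mu>* ve + \<mu>* vf" by (simp add: algebra_simps)
  also have "\<dots> = - \<mu>*((vf + \<mu> * ve) - \<mu> * ve - vf)" by (subst assms(3)) (simp add: algebra_simps)
  also have "\<dots> = 0" by simp
  finally show ?thesis using assms by simp
qed

theorem proposition5:
  fixes m eps :: real
    and A1 A2 :: "real \<Rightarrow> int \<Rightarrow> int \<Rightarrow> complex"
    and At1 At2 :: "int \<Rightarrow> int \<Rightarrow> complex"
  assumes "m > 0" and "eps > 0"
    and sol: "\<And>\<delta>. 0 < \<delta> \<Longrightarrow> \<delta> < 1 \<Longrightarrow> is_A m eps \<delta> (A1 \<delta>) (A2 \<delta>)"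
    and lim1: "\<And>i j. ((\<lambda>\<delta>. A1 \<delta> (2*i) (2*j)) \<longlongrightarrow> At1 i j) (at_right 0)"
    and lim2: "\<And>i j. ((\<lambda>\<delta>. A2 \<delta> (2*i) (2*j)) \<longlongrightarrow> At2 i j) (at_right 0)"
  shows "(\<forall>i j. (i, j) \<noteq> (0, 0) \<longrightarrow>
            complex_of_real (sqrt (1 + m\<^sup>2 * eps\<^sup>2)) * At1 i (j + 1)
          + complex_of_real (sqrt (1 + m\<^sup>2 * eps\<^sup>2)) * At1 i (j - 1)
          - At1 (i + 1) j - At1 (i - 1) j = 0)
       \<and> (\<forall>i j. (i, j) \<notin> {(-1, 0), (0, -1)} \<longrightarrow>
            complex_of_real (sqrt (1 + m\<^sup>2 * eps\<^sup>2)) * At2 i (j + 1)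
          + complex_of_real (sqrt (1 + m\<^sup>2 * eps\<^sup>2)) * At2 i (j - 1)
          - At2 (i + 1) j - At2 (i - 1) j = 0)"
proof -
  define C where "C = sqrt (1 + m\<^sup>2 * eps\<^sup>2)"
  define c where "c = complex_of_real C"
  define \<mu> where "\<mu> = complex_of_real (m*eps)"
  have Cpos: "C > 0" unfolding C_def by (simp add: add_pos_nonneg)
  have cne: "c \<noteq> 0" unfolding c_def using Cpos by simp
  have "C^2 = 1 + m\<^sup>2 * eps\<^sup>2" unfolding C_def by (simp add: add_nonneg_nonneg)
  then have "C*C = 1 + (m*eps)*(m*eps)" by (simp add: power2_eq_square algebra_simps)
  then have "complex_of_real (C*C) = complex_of_real (1 + (m*eps)*(m*eps))" by simp
  then have cc: "c*c = 1 + \<mu>*\<mu>" unfolding c_def \<mu>_def by simp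
  have F1: "c * At1 i j = At1 (i+1) (j-1) + \<mu> * At2 i (j-1)" for i j
    using E1[OF sol lim1 lim2, of i j] Cpos unfolding c_def \<mu>_def C_def by (simp add: field_simps)
  have F2: "(i, j) \<noteq> (0,0) \<Longrightarrow> c * At2 i j = At2 (i-1) (j-1) - \<mu> * At1 i (j-1)" for i j
    using E2[OF sol lim1 lim2, of i j] Cpos unfolding c_def \<mu>_def C_def by (simp add: field_simps)
  show ?thesis
  proof (intro conjI allI impI)
    fix i j :: int assume h: "(i, j) \<noteq> (0, 0)"
    have "c * At1 i (j+1) + c * At1 i (j-1) - At1 (i+1) j - At1 (i-1) j = 0"
    proof (rule alg1[where za = "At2 i j" and zb = "At2 (i-1) (j-1)" and \<mu> = \<mu>])
      show "c * At1 i (j + 1) = At1 (i + 1) j + \<mu> * At2 i j" using F1[of i "j+1"] by simp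
      show "c * At1 (i - 1) j = At1 i (j - 1) + \<mu> * At2 (i - 1) (j - 1)" using F1[of "i-1" j] by simp
      show "c * At2 i j = At2 (i - 1) (j - 1) - \<mu> * At1 i (j - 1)" using F2[OF h] .
    qed (use cc cne in auto)
    then show "complex_of_real (sqrt (1 + m\<^sup>2 * eps\<^sup>2)) * At1 i (j + 1)
          + complex_of_real (sqrt (1 + m\<^sup>2 * eps\<^sup>2)) * At1 i (j - 1)
          - At1 (i + 1) j - At1 (i - 1) j = 0" unfolding c_def C_def .
  next
    fix i j :: int assume h: "(i, j) \<notin> {(-1, 0), (0, -1)}"
    have "c * At2 i (j+1) + c * At2 i (j-1) - At2 (i+1) j - At2 (i-1) j = 0"
    proof (rule alg2[where a = "At1 i j" and vf = "At1 (i+1) (j-1)" and \<mu> = \<mu>])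
      have h1: "(i, j+1) \<noteq> (0,0)" "(i+1, j) \<noteq> (0,0)" using h by auto
      show "c * At2 i (j + 1) = At2 (i - 1) j - \<mu> * At1 i j" using F2[OF h1(1)] by simp
      show "c * At2 (i + 1) j = At2 i (j - 1) - \<mu> * At1 (i + 1) (j - 1)" using F2[OF h1(2)] by simp
      show "c * At1 i j = At1 (i + 1) (j - 1) + \<mu> * At2 i (j - 1)" using F1 .
    qed (use cc cne in auto)
    then show "complex_of_real (sqrt (1 + m\<^sup>2 * eps\<^sup>2)) * At2 i (j + 1)
          + complex_of_real (sqrt (1 + m\<^sup>2 * eps\<^sup>2)) * At2 i (j - 1)
          - At2 (i + 1) j - At2 (i - 1) j = 0" unfolding c_def C_def .
  qed
qed

end
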